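(* Let $\mathcal{P}$ be a collection of cells. Let $a=(i,j)$, $b=(k,l)$ with $i<k$, $j<l$, and $\beta=(p,q)$ with $p>k$, $q>l$, and suppose $[a,b]$ and $[\alpha,\beta]$ with $\alpha=b$ are inner intervals of $\mathcal{P}$. Put $c=(i,l)$, $d=(k,j)$, $\gamma=(k,q)$, $\delta=(p,l)$, $h=(p,j)$, $r=(i,q)$. Let $<^{\mathsf{P}}$ be a $\mathsf{P}$-order on $V(\mathcal{P})$ and suppose that the leading monomials of $f_{a,b}$ and $f_{\alpha,\beta}$ with respect to $<^{\mathsf{P}}_{\mathrm{lex}}$ are not coprime. Then $S(f_{a,b},f_{\alpha,\beta})$ reduces to $0$ modulo $\mathcal{G}$ with respect to $<^{\mathsf{P}}_{\mathrm{lex}}$ if and only if one of the following holds: (1) $x_ax_\gamma x_\delta<^{\mathsf{P}}_{\mathrm{lex}}x_\beta x_dx_c$, $[d,\delta]$ is an inner interval of $\mathcal{P}$, and ($h,\gamma<^{\mathsf{P}}\beta$ or $h,\gamma<^{\mathsf{P}}d$); (2) $x_ax_\gamma x_\delta<^{\mathsf{P}}_{\mathrm{lex}}x_\beta x_dx_c$, $[c,\gamma]$ is an inner interval of $\mathcal{P}$, and ($r,\delta<^{\mathsf{P}}\beta$ or $r,\delta<^{\mathsf{P}}c$); (3) $x_\beta x_dx_c<^{\mathsf{P}}_{\mathrm{lex}}x_ax_\gamma x_\delta$, $[c,\gamma]$ is an inner interval of $\mathcal{P}$, and ($r,d<^{\mathsf{P}}a$ or $r,d<^{\mathsf{P}}\gamma$);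 (4) $x_\beta x_dx_c<^{\mathsf{P}}_{\mathrm{lex}}x_ax_\gamma x_\delta$, $[d,\delta]$ is an inner interval of $\mathcal{P}$, and ($c,h<^{\mathsf{P}}a$ or $c,h<^{\mathsf{P}}\delta$).
   Context: For $a=(i,j), b=(k,l)\in\mathbb{Z}^2$ with $a\le b$ componentwise, the interval $[a,b]=\{(m,n)\in\mathbb{Z}^2: i\le m\le k,\ j\le n\le l\}$; it is proper if $i<k$ and $j<l$, in which case $a,b$ are its diagonal corners and $(i,l)$ (upper left), $(k,j)$ (lower right) its anti-diagonal corners. A cell is a proper interval $[v,v+(1,1)]$; its vertices are its four corners. A collection of cells $\mathcal{P}$ is a nonempty finite set of cells; $V(\mathcal{P})$ is the set of all vertices of its cells. A proper interval $[a,b]$ is an inner interval of $\mathcal{P}$ if every cell $[v,v+(1,1)]\subseteq[a,b]$ belongs to $\mathcal{P}$. Let $K$ be a field and $S=K[x_v: v\in V(\mathcal{P})]$. For an inner interval $[a,b]$ with upper left corner $c$ and lower right corner $d$, put $f_{a,b}=x_ax_b-x_cx_d$; $\mathcal{G}$ is the set of all such inner 2-minors of $\mathcal{P}$. A $\mathsf{P}$-order is a total order $<^{\mathsf{P}}$ on $V(\mathcal{P})$; $<^{\mathsf{P}}_{\mathrm{lex}}$ is the lexicographic monomial order on $S$ with $x_u<x_v\iff u<^{\mathsf{P}}v$. For vertices $u,v,w$, "$u,v<^{\mathsf{P}}w$" means $u<^{\mathsf{P}}w$ and $v<^{\mathsf{P}}w$. *)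

theory Defs
  imports Main "HOL-Library.Poly_Mapping"
begin

type_synonym vertex = "int \<times> int"
type_synonym monom = "vertex \<Rightarrow>\<^sub>0 nat"
type_synonym 'k mpoly = "monom \<Rightarrow>\<^sub>0 'k"

definition interval :: "vertex \<Rightarrow> vertex \<Rightarrow> vertex set" where
  "interval a b = {(m, n). fst a \<le> m \<and> m \<le> fst b \<and> snd a \<le> n \<and> n \<le> snd b}"

definition proper_interval :: "vertex \<Rightarrow> vertex \<Rightarrow> bool" where
  "proper_interval a b \<longleftrightarrow> fst a < fst b \<and> snd a < snd b"

definition cell :: "vertex \<Rightarrow> vertex set" where
  "cell v = interval v (fst v + 1, snd v + 1)"

definition is_cell :: "vertex set \<Rightarrow> bool" where
  "is_cell C \<longleftrightarrow> (\<exists>v. C = cell v)"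

definition collection_of_cells :: "vertex set set \<Rightarrow> bool" where
  "collection_of_cells P \<longleftrightarrow> P \<noteq> {} \<and> finite P \<and> (\<forall>C\<in>P. is_cell C)"

text \<open>The vertices of a cell [v, v+(1,1)] are exactly its four lattice points.\<close>
definition vertices :: "vertex set set \<Rightarrow> vertex set" where
  "vertices P = \<Union>P"

definition inner_interval :: "vertex set set \<Rightarrow> vertex \<Rightarrow> vertex \<Rightarrow> bool" where
  "inner_interval P a b \<longleftrightarrow> proper_interval a b \<and>
     (\<forall>v. cell v \<subseteq> interval a b \<longrightarrow> cell v \<in> P)"

definition var :: "vertex \<Rightarrow> ('k::field) mpoly" where
  "var v = Poly_Mapping.single (Poly_Mapping.single v 1) 1"

definition mon3 :: "vertex \<Rightarrow> vertex \<Rightarrow> vertex \<Rightarrow> monom" where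
  "mon3 u v w = Poly_Mapping.single u 1 + Poly_Mapping.single v 1 + Poly_Mapping.single w 1"

definition poly_in :: "vertex set \<Rightarrow> ('k::field) mpoly \<Rightarrow> bool" where
  "poly_in V f \<longleftrightarrow> (\<forall>mm\<in>Poly_Mapping.keys f. Poly_Mapping.keys mm \<subseteq> V)"

definition f_minor :: "vertex \<Rightarrow> vertex \<Rightarrow> ('k::field) mpoly" where
  "f_minor a b = var a * var b - var (fst a, snd b) * var (fst b, snd a)"

definition inner_minors :: "vertex set set \<Rightarrow> ('k::field) mpoly set" where
  "inner_minors P = {f_minor a b | a b. inner_interval P a b}"

text \<open>A P-order: a strict total order on V(P), given as a relation R where (u,v) in R means u <P v.\<close>
definition P_order :: "vertex set set \<Rightarrow> (vertex \<times> vertex) set \<Rightarrow> bool" where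
  "P_order P R \<longleftrightarrow> R \<subseteq> vertices P \<times> vertices P \<and> strict_linear_order_on (vertices P) R"

text \<open>Lexicographic order with x_u < x_v iff u <P v: m1 < m2 iff at the
  largest variable where the exponents differ, m2 has the larger exponent.\<close>
definition lex_less :: "(vertex \<times> vertex) set \<Rightarrow> monom \<Rightarrow> monom \<Rightarrow> bool" where
  "lex_less R m1 m2 \<longleftrightarrow>
     (\<exists>v. Poly_Mapping.lookup m1 v < Poly_Mapping.lookup m2 v \<and> (\<forall>w. (v, w) \<in> R \<longrightarrow> Poly_Mapping.lookup m1 w = Poly_Mapping.lookup m2 w))"

definition lex_le :: "(vertex \<times> vertex) set \<Rightarrow> monom \<Rightarrow> monom \<Rightarrow> bool" where
  "lex_le R m1 m2 \<longleftrightarrow> m1 = m2 \<or> lex_less R m1 m2"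

definition lead_monom :: "(vertex \<times> vertex) set \<Rightarrow> ('k::field) mpoly \<Rightarrow> monom" where
  "lead_monom R f = (THE m. m \<in> Poly_Mapping.keys f \<and> (\<forall>m'\<in>Poly_Mapping.keys f. m' \<noteq> m \<longrightarrow> lex_less R m' m))"

definition lead_coeff :: "(vertex \<times> vertex) set \<Rightarrow> ('k::field) mpoly \<Rightarrow> 'k" where
  "lead_coeff R f = Poly_Mapping.lookup f (lead_monom R f)"

text \<open>S-polynomial: S(f,g) = lcm/(lc(f) in(f)) f - lcm/(lc(g) in(g)) g,
  where lcm/in(f) = in(g) - in(f) and lcm/in(g) = in(f) - in(g) (truncated, pointwise).\<close>
definition spoly :: "(vertex \<times> vertex) set \<Rightarrow> ('k::field) mpoly \<Rightarrow> 'k mpoly \<Rightarrow> 'k mpoly" where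
  "spoly R f g =
     Poly_Mapping.single (lead_monom R g - lead_monom R f) (1 / lead_coeff R f) * f
   - Poly_Mapping.single (lead_monom R f - lead_monom R g) (1 / lead_coeff R g) * g"

text \<open>f reduces to 0 modulo G (Herzog--Hibi): f has a standard expression
  f = sum u_g g with remainder 0, i.e. in(u_g g) <= in(f) whenever u_g g is nonzero,
  with cofactors u_g in S.\<close>
definition reduces_to_zero ::
  "vertex set \<Rightarrow> (vertex \<times> vertex) set \<Rightarrow> ('k::field) mpoly set \<Rightarrow> 'k mpoly \<Rightarrow> bool" where
  "reduces_to_zero V R G f \<longleftrightarrow> f = 0 \<or>
     (\<exists>F u. F \<subseteq> G \<and> finite F \<and> f = (\<Sum>g\<in>F. u g * g) \<and>
        (\<forall>g\<in>F. poly_in V (u g)) \<and>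
        (\<forall>g\<in>F. u g * g \<noteq> 0 \<longrightarrow> lex_le R (lead_monom R (u g * g)) (lead_monom R f)))"

end

theory Submission
  imports Defs
begin


abbreviation mon1 :: "vertex \<Rightarrow> monom" where "mon1 v \<equiv> Poly_Mapping.single v 1"

definition SLO :: "vertex set \<Rightarrow> (vertex \<times> vertex) set \<Rightarrow> bool" where
  "SLO V R \<longleftrightarrow> R \<subseteq> V \<times> V \<and> trans R \<and> irrefl R \<and> total_on V R"

lemma P_order_SLO: "P_order P R \<Longrightarrow> SLO (vertices P) R"
  unfolding P_order_def SLO_def strict_linear_order_on_def by auto

lemma SLO_irr: "SLO V R \<Longrightarrow> (x,x) \<notin> R"
  unfolding SLO_def irrefl_on_def by (cases x) blast
lemma SLO_trans: "SLO V R \<Longrightarrow> (x,y) \<in> R \<Longrightarrow> (y,z) \<in> R \<Longrightarrow> (x,z) \<in> R"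
  unfolding SLO_def trans_def by blast
lemma SLO_asym: "SLO V R \<Longrightarrow> (x,y) \<in> R \<Longrightarrow> (y,x) \<in> R \<Longrightarrow> False"
  using SLO_trans SLO_irr by blast
lemma SLO_total: "SLO V R \<Longrightarrow> x \<in> V \<Longrightarrow> y \<in> V \<Longrightarrow> x \<noteq> y \<Longrightarrow> (x,y) \<in> R \<or> (y,x) \<in> R"
  unfolding SLO_def total_on_def by blast
lemma SLO_V: "SLO V R \<Longrightarrow> (x,y) \<in> R \<Longrightarrow> x \<in> V \<and> y \<in> V"
  unfolding SLO_def by blast

lemma lex_irrefl: "\<not> lex_less R m m"
  unfolding lex_less_def by auto

lemma lex_add_right: "lex_less R m n \<Longrightarrow> lex_less R (m + k) (n + k)"
  unfolding lex_less_def by (auto simp: lookup_add)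
lemma lex_add_left: "lex_less R m n \<Longrightarrow> lex_less R (k + m) (k + n)"
  unfolding lex_less_def by (auto simp: lookup_add)

lemma lex_trans:
  assumes S: "SLO V R" and "Poly_Mapping.keys m2 \<subseteq> V" "Poly_Mapping.keys m3 \<subseteq> V"
    and "lex_less R m1 m2" "lex_less R m2 m3"
  shows "lex_less R m1 m3"
proof -
  obtain v1 where v1: "Poly_Mapping.lookup m1 v1 < Poly_Mapping.lookup m2 v1" "\<forall>w. (v1,w)\<in>R \<longrightarrow> Poly_Mapping.lookup m1 w = Poly_Mapping.lookup m2 w"
    using assms(4) unfolding lex_less_def by blast
  obtain v2 where v2: "Poly_Mapping.lookup m2 v2 < Poly_Mapping.lookup m3 v2" "\<forall>w. (v2,w)\<in>R \<longrightarrow> Poly_Mapping.lookup m2 w = Poly_Mapping.lookup m3 w"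
    using assms(5) unfolding lex_less_def by blast
  have "v1 \<in> V" using v1(1) assms(2) by (auto simp: in_keys_iff)
  moreover have "v2 \<in> V" using v2(1) assms(3) by (auto simp: in_keys_iff)
  ultimately consider "v1 = v2" | "(v1,v2) \<in> R" | "(v2,v1) \<in> R" using SLO_total[OF S] by blast
  then show ?thesis
  proof cases
    case 1 then show ?thesis using v1 v2 unfolding lex_less_def by (intro exI[of _ v1]) auto
  next
    case 2
    have "Poly_Mapping.lookup m1 v2 < Poly_Mapping.lookup m3 v2" using v1(2)[rule_format, OF 2] v2(1) by simp
    moreover have "\<forall>w. (v2,w)\<in>R \<longrightarrow> Poly_Mapping.lookup m1 w = Poly_Mapping.lookup m3 w"
      using v1(2) v2(2) 2 SLO_trans[OF S, of v1 v2] by auto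
    ultimately show ?thesis unfolding lex_less_def by blast
  next
    case 3
    have "Poly_Mapping.lookup m1 v1 < Poly_Mapping.lookup m3 v1" using v2(2)[rule_format, OF 3] v1(1) by simp
    moreover have "\<forall>w. (v1,w)\<in>R \<longrightarrow> Poly_Mapping.lookup m1 w = Poly_Mapping.lookup m3 w"
      using v1(2) v2(2) 3 SLO_trans[OF S, of v2 v1] by auto
    ultimately show ?thesis unfolding lex_less_def by blast
  qed
qed

lemma lex_asym:
  assumes S: "SLO V R" and "Poly_Mapping.keys m \<subseteq> V" "Poly_Mapping.keys n \<subseteq> V"
    and "lex_less R m n" "lex_less R n m"
  shows False
  using lex_trans[OF S assms(3,2) assms(4,5)] lex_irrefl by blast

lemma finite_has_Rmax:
  assumes S: "SLO V R" and "finite D" "D \<noteq> {}" "D \<subseteq> V"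
  shows "\<exists>v\<in>D. \<forall>w\<in>D. (v,w) \<notin> R"
  using assms(2,3,4)
proof (induction D rule: finite_ne_induct)
  case (singleton x) then show ?case using SLO_irr[OF S] by auto
next
  case (insert x F)
  then obtain v where v: "v \<in> F" "\<forall>w\<in>F. (v,w) \<notin> R" by auto
  show ?case
  proof (cases "(v,x) \<in> R")
    case True
    have "\<forall>w\<in>insert x F. (x,w) \<notin> R"
      using True v SLO_trans[OF S] SLO_irr[OF S] by blast
    then show ?thesis by blast
  next
    case False
    then show ?thesis using v by blast
  qed
qed

lemma lex_total:
  assumes S: "SLO V R" and "Poly_Mapping.keys m \<subseteq> V" "Poly_Mapping.keys n \<subseteq> V" "m \<noteq> n"
  shows "lex_less R m n \<or> lex_less R n m"
proof -
  let ?D = "{v. Poly_Mapping.lookup m v \<noteq> Poly_Mapping.lookup n v}"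
  have sub: "?D \<subseteq> Poly_Mapping.keys m \<union> Poly_Mapping.keys n" by (auto simp: in_keys_iff)
  hence fin: "finite ?D" by (rule finite_subset) simp
  have ne: "?D \<noteq> {}"
  proof
    assume "?D = {}"
    then have "\<And>v. Poly_Mapping.lookup m v = Poly_Mapping.lookup n v" by blast
    then have "m = n" by (rule poly_mapping_eqI)
    with assms(4) show False by simp
  qed
  have "?D \<subseteq> V" using sub assms(2,3) by blast
  then obtain v where v: "v \<in> ?D" "\<forall>w\<in>?D. (v,w) \<notin> R"
    using finite_has_Rmax[OF S fin ne] by blast
  have eq: "\<forall>w. (v,w) \<in> R \<longrightarrow> Poly_Mapping.lookup m w = Poly_Mapping.lookup n w" using v by auto
  show ?thesis
  proof (cases "Poly_Mapping.lookup m v < Poly_Mapping.lookup n v")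
    case True then show ?thesis unfolding lex_less_def using eq by blast
  next
    case False
    hence "Poly_Mapping.lookup n v < Poly_Mapping.lookup m v" using v(1) by auto
    then show ?thesis unfolding lex_less_def using eq by (intro disjI2 exI[of _ v]) auto
  qed
qed

lemma has_lexmax:
  assumes S: "SLO V R" and "finite K" "K \<noteq> {}" "\<forall>m\<in>K. Poly_Mapping.keys m \<subseteq> V"
  shows "\<exists>m\<in>K. \<forall>m'\<in>K. m' \<noteq> m \<longrightarrow> lex_less R m' m"
  using assms(2,3,4)
proof (induction K rule: finite_ne_induct)
  case (singleton x) then show ?case by auto
next
  case (insert x F)
  then obtain m where m: "m \<in> F" "\<forall>m'\<in>F. m' \<noteq> m \<longrightarrow> lex_less R m' m" by auto
  have xV: "Poly_Mapping.keys x \<subseteq> V" and mV: "Poly_Mapping.keys m \<subseteq> V" using insert m by auto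
  have "x \<noteq> m" using insert m by auto
  then consider "lex_less R x m" | "lex_less R m x" using lex_total[OF S xV mV] by blast
  then show ?case
  proof cases
    case 1
    have "\<forall>m'\<in>insert x F. m' \<noteq> m \<longrightarrow> lex_less R m' m" using m 1 by blast
    then show ?thesis using m(1) by blast
  next
    case 2
    have "\<forall>m'\<in>insert x F. m' \<noteq> x \<longrightarrow> lex_less R m' x"
    proof
      fix m' assume "m' \<in> insert x F"
      show "m' \<noteq> x \<longrightarrow> lex_less R m' x"
      proof
        assume "m' \<noteq> x"
        then have "m' \<in> F" using \<open>m' \<in> insert x F\<close> by blast
        show "lex_less R m' x"
        proof (cases "m' = m")
          case True then show ?thesis using 2 by simp
        next
          case False then have "lex_less R m' m" using m \<open>m' \<in> F\<close> by blast
          then show ?thesis using lex_trans[OF S mV xV _ 2] by blast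
        qed
      qed
    qed
    then show ?thesis by (intro bexI[of _ x]) simp_all
  qed
qed

lemma lead_props:
  fixes f :: "('k::field) mpoly"
  assumes S: "SLO V R" and "f \<noteq> 0" "\<forall>m\<in>Poly_Mapping.keys f. Poly_Mapping.keys m \<subseteq> V"
  shows "lead_monom R f \<in> Poly_Mapping.keys f \<and> (\<forall>m'\<in>Poly_Mapping.keys f. m' \<noteq> lead_monom R f \<longrightarrow> lex_less R m' (lead_monom R f))"
proof -
  have "Poly_Mapping.keys f \<noteq> {}" using assms(2) by simp
  then obtain m where m: "m \<in> Poly_Mapping.keys f" "\<forall>m'\<in>Poly_Mapping.keys f. m' \<noteq> m \<longrightarrow> lex_less R m' m"
    using has_lexmax[OF S finite_keys _ assms(3)] by blast
  have "lead_monom R f = m"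
    unfolding lead_monom_def
  proof (rule the_equality)
    show "m \<in> Poly_Mapping.keys f \<and> (\<forall>m'\<in>Poly_Mapping.keys f. m' \<noteq> m \<longrightarrow> lex_less R m' m)" using m by blast
  next
    fix n assume n: "n \<in> Poly_Mapping.keys f \<and> (\<forall>m'\<in>Poly_Mapping.keys f. m' \<noteq> n \<longrightarrow> lex_less R m' n)"
    show "n = m"
    proof (rule ccontr)
      assume "n \<noteq> m"
      then have "lex_less R n m" "lex_less R m n" using m n by auto
      then show False using lex_asym[OF S] assms(3) m(1) n by blast
    qed
  qed
  then show ?thesis using m by simp
qed


lemma lead_ge:
  fixes f :: "('k::field) mpoly"
  assumes S: "SLO V R" and "f \<noteq> 0" "\<forall>m\<in>Poly_Mapping.keys f. Poly_Mapping.keys m \<subseteq> V" "m \<in> Poly_Mapping.keys f"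
  shows "lex_le R m (lead_monom R f)"
  using lead_props[OF assms(1-3)] assms(4) unfolding lex_le_def by blast

lemma lead_le:
  fixes f :: "('k::field) mpoly"
  assumes S: "SLO V R" and "f \<noteq> 0" "\<forall>m\<in>Poly_Mapping.keys f. Poly_Mapping.keys m \<subseteq> V \<and> lex_le R m T"
  shows "lex_le R (lead_monom R f) T"
  using lead_props[OF S assms(2)] assms(3) by blast

lemma lead_eq:
  fixes f :: "('k::field) mpoly"
  assumes S: "SLO V R" and "\<forall>m\<in>Poly_Mapping.keys f. Poly_Mapping.keys m \<subseteq> V" "m \<in> Poly_Mapping.keys f"
    "\<forall>m'\<in>Poly_Mapping.keys f. m' \<noteq> m \<longrightarrow> lex_less R m' m"
  shows "lead_monom R f = m"
proof -
  have "f \<noteq> 0" using assms(3) by auto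
  from lead_props[OF S this assms(2)] have L: "lead_monom R f \<in> Poly_Mapping.keys f"
    "\<forall>m'\<in>Poly_Mapping.keys f. m' \<noteq> lead_monom R f \<longrightarrow> lex_less R m' (lead_monom R f)" by auto
  show ?thesis
  proof (rule ccontr)
    assume ne: "lead_monom R f \<noteq> m"
    then have "lex_less R m (lead_monom R f)" "lex_less R (lead_monom R f) m" using L assms(3,4) by auto
    then show False using lex_asym[OF S] assms(2,3) L(1) by blast
  qed
qed

lemma lex_le_trans:
  assumes S: "SLO V R" and "Poly_Mapping.keys m2 \<subseteq> V" "Poly_Mapping.keys m3 \<subseteq> V"
    and "lex_le R m1 m2" "lex_le R m2 m3"
  shows "lex_le R m1 m3"
  using assms lex_trans[OF S] unfolding lex_le_def by blast

lemma lex_le_less_trans: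
  assumes S: "SLO V R" and "Poly_Mapping.keys m2 \<subseteq> V" "Poly_Mapping.keys m3 \<subseteq> V"
    and "lex_le R m1 m2" "lex_less R m2 m3"
  shows "lex_less R m1 m3"
  using assms lex_trans[OF S] unfolding lex_le_def by blast

lemma lex_less_le_trans:
  assumes S: "SLO V R" and "Poly_Mapping.keys m2 \<subseteq> V" "Poly_Mapping.keys m3 \<subseteq> V"
    and "lex_less R m1 m2" "lex_le R m2 m3"
  shows "lex_less R m1 m3"
  using assms lex_trans[OF S] unfolding lex_le_def by blast

lemma lex_le_add_right: "lex_le R m n \<Longrightarrow> lex_le R (m + k) (n + k)"
  unfolding lex_le_def by (auto intro: lex_add_right)

lemma keys_add_sub: "Poly_Mapping.keys m \<subseteq> V \<Longrightarrow> Poly_Mapping.keys n \<subseteq> V \<Longrightarrow> Poly_Mapping.keys (m + n) \<subseteq> V"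
  by (rule order_trans[OF keys_add]) simp

lemma keys_mon1: "x \<in> V \<Longrightarrow> Poly_Mapping.keys (mon1 x) \<subseteq> V" by simp



lemma var_mult: "(var x :: ('k::field) mpoly) * var y = Poly_Mapping.single (mon1 x + mon1 y) 1"
  by (simp add: var_def mult_single)

lemma var_mult3: "(var x :: ('k::field) mpoly) * var y * var z = Poly_Mapping.single (mon3 x y z) 1"
  by (simp add: var_def mult_single mon3_def)

lemma lookup_mult_single:
  fixes p :: "('k::field) mpoly" and s t :: monom
  shows "Poly_Mapping.lookup (p * Poly_Mapping.single t (1::'k::field)) (s + t) = Poly_Mapping.lookup p s"
proof -
  have inner: "(\<Sum>q. Poly_Mapping.lookup (Poly_Mapping.single t (1::'k)) q when s + t = l + q) = (1 when l = s)" for l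
  proof -
    have "(\<lambda>q. Poly_Mapping.lookup (Poly_Mapping.single t (1::'k)) q when s + t = l + q) = (\<lambda>q. ((1::'k) when l = s) when t = q)"
      by (auto simp: lookup_single when_def fun_eq_iff)
    then show ?thesis by (simp only: Sum_any_when_equal')
  qed
  have "Poly_Mapping.lookup (p * Poly_Mapping.single t 1) (s + t)
      = (\<Sum>l. Poly_Mapping.lookup p l * (\<Sum>q. Poly_Mapping.lookup (Poly_Mapping.single t (1::'k)) q when s + t = l + q))"
    by (rule lookup_mult)
  also have "\<dots> = (\<Sum>l. Poly_Mapping.lookup p l * (1 when l = s))"
    by (simp only: inner)
  also have "\<dots> = (\<Sum>l. Poly_Mapping.lookup p l when l = s)"
    by (simp only: mult_when mult_1_right)
  also have "\<dots> = Poly_Mapping.lookup p s" by (rule Sum_any_when_equal)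
  finally show ?thesis .
qed

lemma keys_mult_single:
  fixes p :: "('k::field) mpoly" and t :: monom
  shows "Poly_Mapping.keys (p * Poly_Mapping.single t (1::'k::field)) \<subseteq> (\<lambda>k. k + t) ` Poly_Mapping.keys p"
  using keys_mult[of p "Poly_Mapping.single t (1::'k)"] by auto

lemma keys_diff: "Poly_Mapping.keys (f - g) \<subseteq> Poly_Mapping.keys f \<union> Poly_Mapping.keys (g::('a \<Rightarrow>\<^sub>0 'b::ab_group_add))"
  using keys_add[of f "-g"] by simp

lemma keys_two:
  assumes "A \<noteq> B"
  shows "Poly_Mapping.keys (Poly_Mapping.single A (1::'k::field) - Poly_Mapping.single B 1) = {A, B}"
  using assms by (auto simp: in_keys_iff lookup_minus lookup_single when_def split: if_splits)



lemma key:
  fixes u :: "('k::field) mpoly"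
  assumes S: "SLO V R" and AB: "lex_less R B A"
    and AV: "Poly_Mapping.keys A \<subseteq> V" and BV: "Poly_Mapping.keys B \<subseteq> V" and uV: "poly_in V u"
    and T: "T \<in> Poly_Mapping.keys (u * (Poly_Mapping.single A 1 - Poly_Mapping.single B 1))"
    and le: "lex_le R (lead_monom R (u * (Poly_Mapping.single A 1 - Poly_Mapping.single B 1))) T"
  shows "\<exists>m. T = m + A"
proof -
  define w where "w = u * (Poly_Mapping.single A (1::'k) - Poly_Mapping.single B 1)"
  have w_eq: "w = u * Poly_Mapping.single A 1 - u * Poly_Mapping.single B 1"
    unfolding w_def by (simp add: right_diff_distrib)
  have ku: "\<And>k. k \<in> Poly_Mapping.keys u \<Longrightarrow> Poly_Mapping.keys k \<subseteq> V"
    using uV unfolding poly_in_def by blast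
  have keysw: "Poly_Mapping.keys w \<subseteq> (\<lambda>k. k + A) ` Poly_Mapping.keys u \<union> (\<lambda>k. k + B) ` Poly_Mapping.keys u"
    using keys_diff[of "u * Poly_Mapping.single A 1" "u * Poly_Mapping.single B 1"]
      keys_mult_single[of u A] keys_mult_single[of u B] unfolding w_eq by blast
  have suppw: "\<forall>m\<in>Poly_Mapping.keys w. Poly_Mapping.keys m \<subseteq> V"
  proof
    fix m assume "m \<in> Poly_Mapping.keys w"
    then obtain k where "k \<in> Poly_Mapping.keys u" "m = k + A \<or> m = k + B" using keysw by blast
    then show "Poly_Mapping.keys m \<subseteq> V" using ku AV BV keys_add_sub by metis
  qed
  have wne: "w \<noteq> 0" using T unfolding w_def by auto
  have une: "u \<noteq> 0" using wne unfolding w_def by auto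
  have suppu: "\<forall>m\<in>Poly_Mapping.keys u. Poly_Mapping.keys m \<subseteq> V" using ku by blast
  define M where "M = lead_monom R u"
  have M: "M \<in> Poly_Mapping.keys u" "\<And>k. k \<in> Poly_Mapping.keys u \<Longrightarrow> lex_le R k M"
    using lead_props[OF S une suppu] unfolding M_def lex_le_def by blast+
  have MV: "Poly_Mapping.keys M \<subseteq> V" using ku M(1) by blast
  have MAV: "Poly_Mapping.keys (M + A) \<subseteq> V" using MV AV by (rule keys_add_sub)
  have notB: "M + A \<notin> Poly_Mapping.keys (u * Poly_Mapping.single B 1)"
  proof
    assume "M + A \<in> Poly_Mapping.keys (u * Poly_Mapping.single B 1)"
    then obtain k where k: "k \<in> Poly_Mapping.keys u" "M + A = k + B"
      using keys_mult_single[of u B] by blast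
    have "lex_le R (k + B) (M + B)" using M(2)[OF k(1)] by (rule lex_le_add_right)
    moreover have "lex_less R (M + B) (M + A)" using AB by (rule lex_add_left)
    moreover have "Poly_Mapping.keys (M + B) \<subseteq> V" using MV BV by (rule keys_add_sub)
    ultimately have "lex_less R (k + B) (M + A)" using lex_le_less_trans[OF S _ MAV] by blast
    then show False using k(2) lex_irrefl by metis
  qed
  have "Poly_Mapping.lookup w (M + A) = Poly_Mapping.lookup u M"
    using notB unfolding w_eq by (simp add: lookup_minus lookup_mult_single in_keys_iff)
  then have MAw: "M + A \<in> Poly_Mapping.keys w" using M(1) by (simp add: in_keys_iff)
  have "lex_le R (M + A) (lead_monom R w)" using lead_ge[OF S wne suppw MAw] .
  moreover have leadV: "Poly_Mapping.keys (lead_monom R w) \<subseteq> V"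
    using lead_props[OF S wne suppw] suppw by blast
  moreover have TV: "Poly_Mapping.keys T \<subseteq> V" using suppw T unfolding w_def by blast
  ultimately have MAT: "lex_le R (M + A) T" using lex_le_trans[OF S] le unfolding w_def by blast
  obtain k where k: "k \<in> Poly_Mapping.keys u" "T = k + A \<or> T = k + B" using keysw T unfolding w_def by blast
  show ?thesis
  proof (cases "T = k + A")
    case True then show ?thesis by blast
  next
    case False
    then have TB: "T = k + B" using k by blast
    have "lex_le R (k + A) (M + A)" using M(2)[OF k(1)] by (rule lex_le_add_right)
    then have "lex_le R (k + A) T" using lex_le_trans[OF S MAV TV _ MAT] by blast
    moreover have "lex_less R (k + B) (k + A)" using AB by (rule lex_add_left)
    moreover have "Poly_Mapping.keys (k + A) \<subseteq> V" using ku[OF k(1)] AV by (rule keys_add_sub)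
    ultimately have "lex_less R T T" using lex_less_le_trans[OF S _ TV] TB by metis
    then show ?thesis using lex_irrefl by metis
  qed
qed

lemma f_minor_eq:
  "(f_minor s t :: ('k::field) mpoly) = Poly_Mapping.single (mon1 s + mon1 t) 1
      - Poly_Mapping.single (mon1 (fst s, snd t) + mon1 (fst t, snd s)) 1"
  by (simp add: f_minor_def var_mult)

lemma lookup_mon1: "Poly_Mapping.lookup (mon1 x) y = (if x = y then 1 else 0)"
  by (simp add: lookup_single)

lemma mon2_neq: "x \<noteq> z \<Longrightarrow> x \<noteq> w \<Longrightarrow> mon1 x + mon1 y \<noteq> mon1 z + mon1 w"
proof
  assume "x \<noteq> z" "x \<noteq> w" "mon1 x + mon1 y = mon1 z + mon1 w"
  then have "Poly_Mapping.lookup (mon1 x + mon1 y) x = Poly_Mapping.lookup (mon1 z + mon1 w) x" by simp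
  then show False using \<open>x \<noteq> z\<close> \<open>x \<noteq> w\<close> by (simp add: lookup_add lookup_single when_def)
qed

lemma mem3:
  assumes "mon3 p1 p2 p3 = m + mon1 x + mon1 y"
  shows "x \<in> {p1,p2,p3} \<and> y \<in> {p1,p2,p3}"
proof -
  have "Poly_Mapping.lookup (mon3 p1 p2 p3) x = Poly_Mapping.lookup (m + mon1 x + mon1 y) x"
       "Poly_Mapping.lookup (mon3 p1 p2 p3) y = Poly_Mapping.lookup (m + mon1 x + mon1 y) y"
    using assms by simp_all
  then show ?thesis unfolding mon3_def by (auto simp: lookup_add lookup_single when_def split: if_splits)
qed

lemma key_minor:
  fixes u :: "('k::field) mpoly"
  assumes S: "SLO V R" and st: "fst s < fst t" "snd s < snd t"
    and V: "s \<in> V" "t \<in> V" "(fst s, snd t) \<in> V" "(fst t, snd s) \<in> V" and uV: "poly_in V u"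
    and T: "T \<in> Poly_Mapping.keys (u * f_minor s t)"
    and le: "lex_le R (lead_monom R (u * f_minor s t)) T"
  shows "(lex_less R (mon1 (fst s, snd t) + mon1 (fst t, snd s)) (mon1 s + mon1 t) \<and> (\<exists>m. T = m + mon1 s + mon1 t))
       \<or> (lex_less R (mon1 s + mon1 t) (mon1 (fst s, snd t) + mon1 (fst t, snd s)) \<and> (\<exists>m. T = m + mon1 (fst s, snd t) + mon1 (fst t, snd s)))"
proof -
  define D where "D = mon1 s + mon1 t"
  define AD where "AD = mon1 (fst s, snd t) + mon1 (fst t, snd s)"
  have DV: "Poly_Mapping.keys D \<subseteq> V" unfolding D_def using V by (intro keys_add_sub) simp_all
  have ADV: "Poly_Mapping.keys AD \<subseteq> V" unfolding AD_def using V by (intro keys_add_sub) simp_all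
  have "s \<noteq> (fst s, snd t)" "s \<noteq> (fst t, snd s)" using st by (cases s; simp)+
  then have ne: "D \<noteq> AD" unfolding D_def AD_def by (rule mon2_neq)
  have g: "f_minor s t = Poly_Mapping.single D (1::'k) - Poly_Mapping.single AD 1"
    unfolding D_def AD_def by (rule f_minor_eq)
  consider "lex_less R AD D" | "lex_less R D AD" using lex_total[OF S DV ADV ne] by blast
  then show ?thesis
  proof cases
    case 1
    have "\<exists>m. T = m + D" using key[OF S 1 DV ADV uV] T le unfolding g by blast
    then show ?thesis using 1 unfolding D_def AD_def by (simp add: add.assoc)
  next
    case 2
    have eq: "u * f_minor s t = (- u) * (Poly_Mapping.single AD 1 - Poly_Mapping.single D 1)"
      unfolding g by (simp add: algebra_simps)
    have uV': "poly_in V (- u)" using uV unfolding poly_in_def by simp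
    have "\<exists>m. T = m + AD" using key[OF S 2 ADV DV uV'] T le unfolding eq by blast
    then show ?thesis using 2 unfolding D_def AD_def by (simp add: add.assoc)
  qed
qed

lemma cell_sub:
  "cell (x, y) \<subseteq> interval u w \<longleftrightarrow> fst u \<le> x \<and> x + 1 \<le> fst w \<and> snd u \<le> y \<and> y + 1 \<le> snd w"
proof
  assume a: "cell (x, y) \<subseteq> interval u w"
  have "(x, y) \<in> cell (x, y)" "(x + 1, y + 1) \<in> cell (x, y)" unfolding cell_def interval_def by auto
  then show "fst u \<le> x \<and> x + 1 \<le> fst w \<and> snd u \<le> y \<and> y + 1 \<le> snd w"
    using a unfolding interval_def by auto
next
  assume "fst u \<le> x \<and> x + 1 \<le> fst w \<and> snd u \<le> y \<and> y + 1 \<le> snd w"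
  then show "cell (x, y) \<subseteq> interval u w" unfolding cell_def interval_def by auto
qed

lemma inner_iff:
  "inner_interval P u w \<longleftrightarrow> fst u < fst w \<and> snd u < snd w \<and>
     (\<forall>x y. fst u \<le> x \<and> x < fst w \<and> snd u \<le> y \<and> y < snd w \<longrightarrow> cell (x, y) \<in> P)"
proof
  assume H: "inner_interval P u w"
  then show "fst u < fst w \<and> snd u < snd w \<and>
     (\<forall>x y. fst u \<le> x \<and> x < fst w \<and> snd u \<le> y \<and> y < snd w \<longrightarrow> cell (x, y) \<in> P)"
    unfolding inner_interval_def proper_interval_def using cell_sub by simp
next
  assume H: "fst u < fst w \<and> snd u < snd w \<and>
     (\<forall>x y. fst u \<le> x \<and> x < fst w \<and> snd u \<le> y \<and> y < snd w \<longrightarrow> cell (x, y) \<in> P)"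
  have "cell v \<in> P" if "cell v \<subseteq> interval u w" for v
  proof -
    obtain x y where v: "v = (x, y)" by (cases v)
    show ?thesis using that H unfolding v cell_sub by auto
  qed
  then show "inner_interval P u w" using H unfolding inner_interval_def proper_interval_def by blast
qed

lemma inner_vertex:
  assumes "inner_interval P u w" "fst u \<le> fst z" "fst z \<le> fst w" "snd u \<le> snd z" "snd z \<le> snd w"
  shows "z \<in> vertices P"
proof -
  obtain z1 z2 where z: "z = (z1, z2)" by (cases z)
  define x where "x = (if z1 < fst w then z1 else z1 - 1)"
  define y where "y = (if z2 < snd w then z2 else z2 - 1)"
  have "fst u < fst w" "snd u < snd w" using assms(1) unfolding inner_iff by auto
  then have "cell (x, y) \<in> P" using assms unfolding inner_iff x_def y_def z by auto
  moreover have "z \<in> cell (x, y)" unfolding cell_def interval_def x_def y_def z by auto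
  ultimately show ?thesis unfolding vertices_def by blast
qed



lemma keys_mon2: "Poly_Mapping.keys (mon1 x + mon1 y) = {x, y}"
  by (auto simp: in_keys_iff lookup_add lookup_single when_def split: if_splits)

lemma keys_two_sub:
  "Poly_Mapping.keys (Poly_Mapping.single A (1::'k::field) - Poly_Mapping.single B 1) \<subseteq> {A, B}"
  by (auto simp: in_keys_iff lookup_minus lookup_single when_def split: if_splits)

lemma lex2_iff:
  assumes S: "SLO V R" and V: "u \<in> V" "w \<in> V" "x \<in> V" "y \<in> V"
    and d: "u \<noteq> w" "u \<noteq> x" "u \<noteq> y" "w \<noteq> x" "w \<noteq> y" "x \<noteq> y"
  shows "lex_less R (mon1 u + mon1 w) (mon1 x + mon1 y) \<longleftrightarrow>
     ((u, x) \<in> R \<and> (w, x) \<in> R) \<or> ((u, y) \<in> R \<and> (w, y) \<in> R)"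
proof
  assume "lex_less R (mon1 u + mon1 w) (mon1 x + mon1 y)"
  then obtain v where v: "Poly_Mapping.lookup (mon1 u + mon1 w) v < Poly_Mapping.lookup (mon1 x + mon1 y) v"
    and eq: "\<And>z. (v, z) \<in> R \<Longrightarrow> Poly_Mapping.lookup (mon1 u + mon1 w) z = Poly_Mapping.lookup (mon1 x + mon1 y) z"
    unfolding lex_less_def by blast
  have vxy: "v = x \<or> v = y" and vuw: "v \<noteq> u" "v \<noteq> w"
    using v d by (auto simp: lookup_add lookup_single when_def split: if_splits)
  have vV: "v \<in> V" using vxy V by blast
  have uv: "(u, v) \<in> R"
  proof -
    have "(v, u) \<notin> R"
    proof
      assume "(v, u) \<in> R"
      from eq[OF this] show False using d by (auto simp: lookup_add lookup_single when_def)
    qed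
    then show ?thesis using SLO_total[OF S V(1) vV] vuw by blast
  qed
  have wv: "(w, v) \<in> R"
  proof -
    have "(v, w) \<notin> R"
    proof
      assume "(v, w) \<in> R"
      from eq[OF this] show False using d by (auto simp: lookup_add lookup_single when_def)
    qed
    then show ?thesis using SLO_total[OF S V(2) vV] vuw by blast
  qed
  show "((u, x) \<in> R \<and> (w, x) \<in> R) \<or> ((u, y) \<in> R \<and> (w, y) \<in> R)"
    using vxy uv wv by blast
next
  assume H: "((u, x) \<in> R \<and> (w, x) \<in> R) \<or> ((u, y) \<in> R \<and> (w, y) \<in> R)"
  have H': "\<exists>v. (v = x \<or> v = y) \<and> (u, v) \<in> R \<and> (w, v) \<in> R \<and> (\<forall>z. (v,z) \<in> R \<longrightarrow> z \<noteq> x \<and> z \<noteq> y)"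
  proof (cases "(x, y) \<in> R")
    case True
    have "(u, y) \<in> R \<and> (w, y) \<in> R" using H True SLO_trans[OF S] by blast
    moreover have "\<forall>z. (y,z) \<in> R \<longrightarrow> z \<noteq> x \<and> z \<noteq> y" using True SLO_asym[OF S] SLO_irr[OF S] by blast
    ultimately show ?thesis by blast
  next
    case False
    then have yx: "(y, x) \<in> R" using SLO_total[OF S V(3,4) d(6)] by blast
    have "(u, x) \<in> R \<and> (w, x) \<in> R" using H yx SLO_trans[OF S] by blast
    moreover have "\<forall>z. (x,z) \<in> R \<longrightarrow> z \<noteq> x \<and> z \<noteq> y" using yx SLO_asym[OF S] SLO_irr[OF S] by blast
    ultimately show ?thesis by blast
  qed
  then obtain v where v: "v = x \<or> v = y" "(u, v) \<in> R" "(w, v) \<in> R" "\<forall>z. (v,z) \<in> R \<longrightarrow> z \<noteq> x \<and> z \<noteq> y"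
    by blast
  have "\<forall>z. (v,z) \<in> R \<longrightarrow> z \<noteq> u \<and> z \<noteq> w" using v(2,3) SLO_asym[OF S] by blast
  then have "\<forall>z. (v,z) \<in> R \<longrightarrow> Poly_Mapping.lookup (mon1 u + mon1 w) z = Poly_Mapping.lookup (mon1 x + mon1 y) z"
    using v(4) by (auto simp: lookup_add lookup_single when_def)
  moreover have "Poly_Mapping.lookup (mon1 u + mon1 w) v < Poly_Mapping.lookup (mon1 x + mon1 y) v"
    using v(1) d by (auto simp: lookup_add lookup_single when_def)
  ultimately show "lex_less R (mon1 u + mon1 w) (mon1 x + mon1 y)" unfolding lex_less_def by blast
qed

lemma reduce_find:
  fixes f :: "('k::field) mpoly"
  assumes S: "SLO (vertices P) R" and red: "reduces_to_zero (vertices P) R (inner_minors P) f"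
    and fne: "f \<noteq> 0" and T: "T \<in> Poly_Mapping.keys f" "lead_monom R f = T"
  shows "\<exists>s t. inner_interval P s t \<and>
    ((lex_less R (mon1 (fst s, snd t) + mon1 (fst t, snd s)) (mon1 s + mon1 t) \<and> (\<exists>m. T = m + mon1 s + mon1 t))
       \<or> (lex_less R (mon1 s + mon1 t) (mon1 (fst s, snd t) + mon1 (fst t, snd s)) \<and> (\<exists>m. T = m + mon1 (fst s, snd t) + mon1 (fst t, snd s))))"
proof -
  obtain F u where F: "F \<subseteq> inner_minors P" "finite F" "f = (\<Sum>g\<in>F. u g * g)"
    "\<forall>g\<in>F. poly_in (vertices P) (u g)"
    "\<forall>g\<in>F. u g * g \<noteq> 0 \<longrightarrow> lex_le R (lead_monom R (u g * g)) (lead_monom R f)"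
    using red fne unfolding reduces_to_zero_def by blast
  have "Poly_Mapping.lookup f T = (\<Sum>g\<in>F. Poly_Mapping.lookup (u g * g) T)"
    using F(3) by (simp add: lookup_sum)
  moreover have "Poly_Mapping.lookup f T \<noteq> 0" using T(1) by (simp add: in_keys_iff)
  ultimately obtain g where g: "g \<in> F" "Poly_Mapping.lookup (u g * g) T \<noteq> 0"
    by (metis (mono_tags, lifting) sum.neutral)
  then have Tk: "T \<in> Poly_Mapping.keys (u g * g)" by (simp add: in_keys_iff)
  then have "u g * g \<noteq> 0" by auto
  then have le: "lex_le R (lead_monom R (u g * g)) T" using F(5) g(1) T(2) by auto
  obtain s t where st: "g = f_minor s t" "inner_interval P s t"
    using F(1) g(1) unfolding inner_minors_def by blast
  have ineq: "fst s < fst t" "snd s < snd t" using st(2) unfolding inner_iff by auto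
  have V: "s \<in> vertices P" "t \<in> vertices P" "(fst s, snd t) \<in> vertices P" "(fst t, snd s) \<in> vertices P"
    using inner_vertex[OF st(2)] ineq by auto
  show ?thesis
    using key_minor[OF S ineq V F(4)[rule_format, OF g(1)]] Tk le st by blast
qed

lemma keys_var_minor:
  "Poly_Mapping.keys ((var x :: ('k::field) mpoly) * f_minor s t) \<subseteq>
     {mon1 x + mon1 s + mon1 t, mon1 x + mon1 (fst s, snd t) + mon1 (fst t, snd s)}"
proof -
  have "(var x :: 'k mpoly) * f_minor s t = Poly_Mapping.single (mon1 x + (mon1 s + mon1 t)) 1
     - Poly_Mapping.single (mon1 x + (mon1 (fst s, snd t) + mon1 (fst t, snd s))) 1"
    unfolding f_minor_eq var_def by (simp add: right_diff_distrib mult_single)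
  then show ?thesis using keys_two_sub by (simp add: add.assoc)
qed

lemma keys_nvar_minor:
  "Poly_Mapping.keys ((- var x :: ('k::field) mpoly) * f_minor s t) \<subseteq>
     {mon1 x + mon1 s + mon1 t, mon1 x + mon1 (fst s, snd t) + mon1 (fst t, snd s)}"
  using keys_var_minor[of x s t] by simp

lemma minor_neq:
  assumes "fst s < fst t" "snd s < snd t"
    and "s \<noteq> s'" "s \<noteq> t'" "s \<noteq> (fst s', snd t')" "s \<noteq> (fst t', snd s')"
  shows "(f_minor s t :: ('k::field) mpoly) \<noteq> f_minor s' t'"
proof
  assume eq: "(f_minor s t :: 'k mpoly) = f_minor s' t'"
  have ne1: "mon1 s + mon1 t \<noteq> mon1 (fst s, snd t) + mon1 (fst t, snd s)"
    using assms(1,2) by (intro mon2_neq) (cases s; auto)+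
  have "mon1 s + mon1 t \<in> Poly_Mapping.keys (f_minor s t :: 'k mpoly)"
    unfolding f_minor_eq keys_two[OF ne1] by simp
  then have "mon1 s + mon1 t \<in> Poly_Mapping.keys (f_minor s' t' :: 'k mpoly)" using eq by simp
  moreover have "Poly_Mapping.keys (f_minor s' t' :: 'k mpoly) \<subseteq>
     {mon1 s' + mon1 t', mon1 (fst s', snd t') + mon1 (fst t', snd s')}"
    unfolding f_minor_eq by (rule keys_two_sub)
  moreover have "mon1 s + mon1 t \<noteq> mon1 s' + mon1 t'" using assms(3,4) by (rule mon2_neq)
  moreover have "mon1 s + mon1 t \<noteq> mon1 (fst s', snd t') + mon1 (fst t', snd s')" using assms(5,6) by (rule mon2_neq)
  ultimately show False by blast
qed

lemma if_case:
  fixes f :: "('k::field) mpoly"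
  assumes S: "SLO (vertices P) R"
    and f: "f = var x * f_minor s t + (- var y) * f_minor s' t'"
    and I: "inner_interval P s t" "inner_interval P s' t'"
    and n: "s \<noteq> s'" "s \<noteq> t'" "s \<noteq> (fst s', snd t')" "s \<noteq> (fst t', snd s')"
    and xy: "x \<in> vertices P" "y \<in> vertices P"
    and l1: "lex_le R (mon1 x + mon1 s + mon1 t) (lead_monom R f)"
    and l2: "lex_le R (mon1 x + mon1 (fst s, snd t) + mon1 (fst t, snd s)) (lead_monom R f)"
    and l3: "lex_le R (mon1 y + mon1 s' + mon1 t') (lead_monom R f)"
    and l4: "lex_le R (mon1 y + mon1 (fst s', snd t') + mon1 (fst t', snd s')) (lead_monom R f)"
  shows "reduces_to_zero (vertices P) R (inner_minors P) f"
proof (cases "f = 0")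
  case True then show ?thesis unfolding reduces_to_zero_def by blast
next
  case False
  let ?V = "vertices P"
  have ineq: "fst s < fst t" "snd s < snd t" "fst s' < fst t'" "snd s' < snd t'"
    using I unfolding inner_iff by auto
  have V1: "s \<in> ?V" "t \<in> ?V" "(fst s, snd t) \<in> ?V" "(fst t, snd s) \<in> ?V"
    using inner_vertex[OF I(1)] ineq by auto
  have V2: "s' \<in> ?V" "t' \<in> ?V" "(fst s', snd t') \<in> ?V" "(fst t', snd s') \<in> ?V"
    using inner_vertex[OF I(2)] ineq by auto
  define g1 where "g1 = (f_minor s t :: 'k mpoly)"
  define g2 where "g2 = (f_minor s' t' :: 'k mpoly)"
  have gne: "g1 \<noteq> g2" unfolding g1_def g2_def using minor_neq[OF ineq(1,2) n] .
  define u where "u = (\<lambda>g. if g = g1 then var x else (- var y :: 'k mpoly))"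
  have sum: "f = (\<Sum>g\<in>{g1, g2}. u g * g)" using gne f unfolding u_def g1_def g2_def by simp
  have G: "{g1, g2} \<subseteq> inner_minors P" unfolding g1_def g2_def inner_minors_def using I by blast
  have pv: "poly_in ?V (var v :: 'k mpoly)" if "v \<in> ?V" for v
    unfolding poly_in_def var_def using that by simp
  have pnv: "poly_in ?V (- var v :: 'k mpoly)" if "v \<in> ?V" for v
    unfolding poly_in_def var_def using that by simp
  have P: "\<forall>g\<in>{g1, g2}. poly_in ?V (u g)" unfolding u_def using pv pnv xy by auto
  have supp3: "Poly_Mapping.keys (mon1 a + mon1 b + mon1 c) \<subseteq> ?V" if "a \<in> ?V" "b \<in> ?V" "c \<in> ?V" for a b c
    using that by (intro keys_add_sub) simp_all
  have X1: "Poly_Mapping.keys (mon1 x + mon1 s + mon1 t) \<subseteq> ?V" using supp3 V1 xy by blast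
  have X2: "Poly_Mapping.keys (mon1 x + mon1 (fst s, snd t) + mon1 (fst t, snd s)) \<subseteq> ?V" using supp3 V1 xy by blast
  have X3: "Poly_Mapping.keys (mon1 y + mon1 s' + mon1 t') \<subseteq> ?V" using supp3 V2 xy by blast
  have X4: "Poly_Mapping.keys (mon1 y + mon1 (fst s', snd t') + mon1 (fst t', snd s')) \<subseteq> ?V" using supp3 V2 xy by blast
  have u1: "u g1 * g1 = var x * f_minor s t" unfolding u_def g1_def by simp
  have u2: "u g2 * g2 = (- var y) * f_minor s' t'" unfolding u_def g2_def using gne g2_def by simp
  have K1: "\<forall>k\<in>Poly_Mapping.keys (u g1 * g1). Poly_Mapping.keys k \<subseteq> ?V \<and> lex_le R k (lead_monom R f)"
  proof
    fix k assume "k \<in> Poly_Mapping.keys (u g1 * g1)"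
    then have "k = mon1 x + mon1 s + mon1 t \<or> k = mon1 x + mon1 (fst s, snd t) + mon1 (fst t, snd s)"
      using keys_var_minor[of x s t] unfolding u1 by blast
    then show "Poly_Mapping.keys k \<subseteq> ?V \<and> lex_le R k (lead_monom R f)" using X1 X2 l1 l2 by blast
  qed
  have K2: "\<forall>k\<in>Poly_Mapping.keys (u g2 * g2). Poly_Mapping.keys k \<subseteq> ?V \<and> lex_le R k (lead_monom R f)"
  proof
    fix k assume "k \<in> Poly_Mapping.keys (u g2 * g2)"
    then have "k = mon1 y + mon1 s' + mon1 t' \<or> k = mon1 y + mon1 (fst s', snd t') + mon1 (fst t', snd s')"
      using keys_nvar_minor[of y s' t'] unfolding u2 by blast
    then show "Poly_Mapping.keys k \<subseteq> ?V \<and> lex_le R k (lead_monom R f)" using X3 X4 l3 l4 by blast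
  qed
  have L: "\<forall>g\<in>{g1, g2}. u g * g \<noteq> 0 \<longrightarrow> lex_le R (lead_monom R (u g * g)) (lead_monom R f)"
    using lead_le[OF S] K1 K2 by blast
  show ?thesis unfolding reduces_to_zero_def using G P L sum by blast
qed



lemma inner_union_h:
  "inner_interval P (x0,y0) (x1,y1) \<Longrightarrow> inner_interval P (x1,y0) (x2,y1) \<Longrightarrow> inner_interval P (x0,y0) (x2,y1)"
  unfolding inner_iff by (auto simp: not_less) (metis linorder_not_le)

lemma inner_union_v:
  "inner_interval P (x0,y0) (x1,y1) \<Longrightarrow> inner_interval P (x0,y1) (x1,y2) \<Longrightarrow> inner_interval P (x0,y0) (x1,y2)"
  unfolding inner_iff by (auto simp: not_less) (metis linorder_not_le)

lemma inner_sub: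
  "inner_interval P u w \<Longrightarrow> fst u \<le> fst u' \<Longrightarrow> snd u \<le> snd u' \<Longrightarrow> fst w' \<le> fst w \<Longrightarrow> snd w' \<le> snd w
   \<Longrightarrow> fst u' < fst w' \<Longrightarrow> snd u' < snd w' \<Longrightarrow> inner_interval P u' w'"
  unfolding inner_iff by auto

lemma lex_le_eq: "X = Y \<Longrightarrow> lex_le R X Y"
  unfolding lex_le_def by simp

lemma lex_le_of_less: "X = Y \<Longrightarrow> lex_less R Y T \<Longrightarrow> lex_le R X T"
  unfolding lex_le_def by simp

lemma spoly_eq:
  fixes i j k l p q :: int
  assumes "i < k" "j < l" "p > k" "q > l"
    and L1: "lead_monom R (f_minor (i, j) (k, l) :: ('k::field) mpoly) = mon1 (i,j) + mon1 (k,l)"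
    and L2: "lead_monom R (f_minor (k, l) (p, q) :: 'k mpoly) = mon1 (k,l) + mon1 (p,q)"
  shows "spoly R (f_minor (i, j) (k, l)) (f_minor (k, l) (p, q) :: 'k mpoly)
     = Poly_Mapping.single (mon3 (i,j) (k,q) (p,l)) 1 - Poly_Mapping.single (mon3 (p,q) (k,j) (i,l)) 1"
proof -
  have f1: "(f_minor (i, j) (k, l) :: 'k mpoly) = Poly_Mapping.single (mon1 (i,j) + mon1 (k,l)) 1 - Poly_Mapping.single (mon1 (i,l) + mon1 (k,j)) 1"
    by (simp add: f_minor_eq)
  have f2: "(f_minor (k, l) (p, q) :: 'k mpoly) = Poly_Mapping.single (mon1 (k,l) + mon1 (p,q)) 1 - Poly_Mapping.single (mon1 (k,q) + mon1 (p,l)) 1"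
    by (simp add: f_minor_eq)
  have ne1: "mon1 (i,j) + mon1 (k,l) \<noteq> mon1 (i,l) + mon1 (k,j)" using assms(1-4) by (intro mon2_neq) auto
  have ne2: "mon1 (k,l) + mon1 (p,q) \<noteq> mon1 (k,q) + mon1 (p,l)" using assms(1-4) by (intro mon2_neq) auto
  have c1: "lead_coeff R (f_minor (i, j) (k, l) :: 'k mpoly) = 1"
    unfolding lead_coeff_def L1 unfolding f1 using ne1 by (simp add: lookup_minus lookup_single when_def)
  have c2: "lead_coeff R (f_minor (k, l) (p, q) :: 'k mpoly) = 1"
    unfolding lead_coeff_def L2 unfolding f2 using ne2 by (simp add: lookup_minus lookup_single when_def)
  have d1: "(mon1 (k,l) + mon1 (p,q)) - (mon1 (i,j) + mon1 (k,l)) = mon1 (p,q)"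
    using assms(1-4) by (intro poly_mapping_eqI) (auto simp: lookup_minus lookup_add lookup_single when_def)
  have d2: "(mon1 (i,j) + mon1 (k,l)) - (mon1 (k,l) + mon1 (p,q)) = mon1 (i,j)"
    using assms(1-4) by (intro poly_mapping_eqI) (auto simp: lookup_minus lookup_add lookup_single when_def)
  show ?thesis
    unfolding spoly_def L1 L2 c1 c2 d1 d2
    unfolding f1 f2
    by (simp add: right_diff_distrib mult_single mon3_def add_ac)
qed




lemma polyid1:
  "(Poly_Mapping.single (mon3 (i,j) (k,q) (p,l)) 1 - Poly_Mapping.single (mon3 (p,q) (k,j) (i,l)) 1 :: ('k::field) mpoly)
   = var (k,q) * f_minor (i,j) (p,l) + (- var (i,l)) * f_minor (k,j) (p,q)"
  unfolding var_mult3[symmetric] f_minor_def by (simp add: algebra_simps)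

lemma polyid2:
  "(Poly_Mapping.single (mon3 (i,j) (k,q) (p,l)) 1 - Poly_Mapping.single (mon3 (p,q) (k,j) (i,l)) 1 :: ('k::field) mpoly)
   = var (p,l) * f_minor (i,j) (k,q) + (- var (k,j)) * f_minor (i,l) (p,q)"
  unfolding var_mult3[symmetric] f_minor_def by (simp add: algebra_simps)

theorem mainTheorem6:
  fixes P :: "vertex set set" and R :: "(vertex \<times> vertex) set"
    and i j k l p q :: int
  assumes "collection_of_cells P"
    and "i < k" and "j < l" and "p > k" and "q > l"
    and "inner_interval P (i, j) (k, l)"
    and "inner_interval P (k, l) (p, q)"
    and "P_order P R"
    and "Poly_Mapping.keys (lead_monom R (f_minor (i, j) (k, l) :: ('k::field) mpoly))
         \<inter> Poly_Mapping.keys (lead_monom R (f_minor (k, l) (p, q) :: 'k mpoly)) \<noteq> {}"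
  shows "reduces_to_zero (vertices P) R (inner_minors P)
           (spoly R (f_minor (i, j) (k, l)) (f_minor (k, l) (p, q)) :: 'k mpoly)
    \<longleftrightarrow>
     (let a = (i, j); b = (k, l); \<alpha> = b; \<beta> = (p, q);
          c = (i, l); d = (k, j); \<gamma> = (k, q); \<delta> = (p, l); h = (p, j); r = (i, q)
      in
      (lex_less R (mon3 a \<gamma> \<delta>) (mon3 \<beta> d c) \<and> inner_interval P d \<delta> \<and>
         (((h, \<beta>) \<in> R \<and> (\<gamma>, \<beta>) \<in> R) \<or> ((h, d) \<in> R \<and> (\<gamma>, d) \<in> R)))
    \<or> (lex_less R (mon3 a \<gamma> \<delta>) (mon3 \<beta> d c) \<and> inner_interval P c \<gamma> \<and>
         (((r, \<beta>) \<in> R \<and> (\<delta>, \<beta>) \<in> R) \<or> ((r, c) \<in> R \<and> (\<delta>, c) \<in> R)))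
    \<or> (lex_less R (mon3 \<beta> d c) (mon3 a \<gamma> \<delta>) \<and> inner_interval P c \<gamma> \<and>
         (((r, a) \<in> R \<and> (d, a) \<in> R) \<or> ((r, \<gamma>) \<in> R \<and> (d, \<gamma>) \<in> R)))
    \<or> (lex_less R (mon3 \<beta> d c) (mon3 a \<gamma> \<delta>) \<and> inner_interval P d \<delta> \<and>
         (((c, a) \<in> R \<and> (h, a) \<in> R) \<or> ((c, \<delta>) \<in> R \<and> (h, \<delta>) \<in> R))))"
proof -
  note ineq = assms(2-5)
  let ?V = "vertices P"
  let ?a = "(i,j)" let ?b = "(k,l)" let ?c = "(i,l)" let ?d = "(k,j)"
  let ?be = "(p,q)" let ?ga = "(k,q)" let ?de = "(p,l)" let ?h = "(p,j)" let ?r = "(i,q)"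
  let ?m1 = "mon3 ?a ?ga ?de" let ?m2 = "mon3 ?be ?d ?c"
  let ?Sp = "Poly_Mapping.single ?m1 1 - Poly_Mapping.single ?m2 (1::'k)"
  have S: "SLO ?V R" using assms(8) by (rule P_order_SLO)
  have vab: "?a \<in> ?V" "?b \<in> ?V" "?c \<in> ?V" "?d \<in> ?V"
    using inner_vertex[OF assms(6)] ineq by auto
  have vbb: "?be \<in> ?V" "?ga \<in> ?V" "?de \<in> ?V"
    using inner_vertex[OF assms(7)] ineq by auto
  have sV: "Poly_Mapping.keys (mon1 x + mon1 y) \<subseteq> ?V" if "x \<in> ?V" "y \<in> ?V" for x y
    using that by (intro keys_add_sub) simp_all
  have sV3: "Poly_Mapping.keys (mon3 x y z) \<subseteq> ?V" if "x \<in> ?V" "y \<in> ?V" "z \<in> ?V" for x y z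
    using that unfolding mon3_def by (intro keys_add_sub) simp_all
  define A1 where "A1 = mon1 (i,j) + mon1 (k,l)"
  define B1 where "B1 = mon1 (i,l) + mon1 (k,j)"
  define A2 where "A2 = mon1 (k,l) + mon1 (p,q)"
  define B2 where "B2 = mon1 (k,q) + mon1 (p,l)"
  have f1: "(f_minor (i, j) (k, l) :: 'k mpoly) = Poly_Mapping.single A1 1 - Poly_Mapping.single B1 1"
    unfolding A1_def B1_def by (simp add: f_minor_eq)
  have f2: "(f_minor (k, l) (p, q) :: 'k mpoly) = Poly_Mapping.single A2 1 - Poly_Mapping.single B2 1"
    unfolding A2_def B2_def by (simp add: f_minor_eq)
  have ne1: "A1 \<noteq> B1" unfolding A1_def B1_def using ineq by (intro mon2_neq) auto
  have ne2: "A2 \<noteq> B2" unfolding A2_def B2_def using ineq by (intro mon2_neq) auto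
  have k1: "Poly_Mapping.keys (f_minor (i, j) (k, l) :: 'k mpoly) = {A1, B1}" unfolding f1 using ne1 by (rule keys_two)
  have k2: "Poly_Mapping.keys (f_minor (k, l) (p, q) :: 'k mpoly) = {A2, B2}" unfolding f2 using ne2 by (rule keys_two)
  have A1V: "Poly_Mapping.keys A1 \<subseteq> ?V" unfolding A1_def using vab by (intro sV)
  have B1V: "Poly_Mapping.keys B1 \<subseteq> ?V" unfolding B1_def using vab by (intro sV)
  have A2V: "Poly_Mapping.keys A2 \<subseteq> ?V" unfolding A2_def using vab vbb by (intro sV)
  have B2V: "Poly_Mapping.keys B2 \<subseteq> ?V" unfolding B2_def using vbb by (intro sV)
  have nz1: "(f_minor (i, j) (k, l) :: 'k mpoly) \<noteq> 0" using k1 by auto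
  have nz2: "(f_minor (k, l) (p, q) :: 'k mpoly) \<noteq> 0" using k2 by auto
  have LP1: "lead_monom R (f_minor (i, j) (k, l) :: 'k mpoly) \<in> {A1, B1} \<and>
     (\<forall>m'\<in>{A1, B1}. m' \<noteq> lead_monom R (f_minor (i, j) (k, l) :: 'k mpoly) \<longrightarrow> lex_less R m' (lead_monom R (f_minor (i, j) (k, l) :: 'k mpoly)))"
    using lead_props[OF S nz1] A1V B1V unfolding k1 by auto
  have LP2: "lead_monom R (f_minor (k, l) (p, q) :: 'k mpoly) \<in> {A2, B2} \<and>
     (\<forall>m'\<in>{A2, B2}. m' \<noteq> lead_monom R (f_minor (k, l) (p, q) :: 'k mpoly) \<longrightarrow> lex_less R m' (lead_monom R (f_minor (k, l) (p, q) :: 'k mpoly)))"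
    using lead_props[OF S nz2] A2V B2V unfolding k2 by auto
  have dj: "Poly_Mapping.keys A1 \<inter> Poly_Mapping.keys B2 = {}" "Poly_Mapping.keys B1 \<inter> Poly_Mapping.keys A2 = {}"
     "Poly_Mapping.keys B1 \<inter> Poly_Mapping.keys B2 = {}"
    unfolding A1_def B1_def A2_def B2_def keys_mon2 using ineq by auto
  have lc1: "lead_monom R (f_minor (i, j) (k, l) :: 'k mpoly) = A1 \<or> lead_monom R (f_minor (i, j) (k, l) :: 'k mpoly) = B1"
    using LP1 by blast
  have lc2: "lead_monom R (f_minor (k, l) (p, q) :: 'k mpoly) = A2 \<or> lead_monom R (f_minor (k, l) (p, q) :: 'k mpoly) = B2"
    using LP2 by blast
  have leads: "lead_monom R (f_minor (i, j) (k, l) :: 'k mpoly) = A1 \<and> lead_monom R (f_minor (k, l) (p, q) :: 'k mpoly) = A2"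
    using lc1 lc2 assms(9) dj by (metis inf_commute)
  have lexA1: "lex_less R B1 A1" using LP1 leads ne1 by auto
  have lexA2: "lex_less R B2 A2" using LP2 leads ne2 by auto
  have sp: "spoly R (f_minor (i, j) (k, l)) (f_minor (k, l) (p, q) :: 'k mpoly) = ?Sp"
    using spoly_eq[OF ineq] leads unfolding A1_def A2_def by blast
  have m12: "?m1 \<noteq> ?m2"
  proof
    assume "?m1 = ?m2"
    then have "Poly_Mapping.lookup ?m1 ?a = Poly_Mapping.lookup ?m2 ?a" by simp
    then show False using ineq by (simp add: mon3_def lookup_add lookup_single when_def)
  qed
  have m1V: "Poly_Mapping.keys ?m1 \<subseteq> ?V" using vab vbb by (intro sV3)
  have m2V: "Poly_Mapping.keys ?m2 \<subseteq> ?V" using vab vbb by (intro sV3)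
  have kS: "Poly_Mapping.keys ?Sp = {?m1, ?m2}" using m12 by (rule keys_two)
  have Snz: "?Sp \<noteq> 0" using kS by auto
  have kSV: "\<forall>m\<in>Poly_Mapping.keys ?Sp. Poly_Mapping.keys m \<subseteq> ?V" using kS m1V m2V by auto
  have leadS_lt: "lead_monom R ?Sp = ?m2" if "lex_less R ?m1 ?m2"
    using lead_eq[OF S kSV] kS that by auto
  have leadS_gt: "lead_monom R ?Sp = ?m1" if "lex_less R ?m2 ?m1"
    using lead_eq[OF S kSV] kS that by auto
  have not_both: "\<not> (lex_less R ?m1 ?m2 \<and> lex_less R ?m2 ?m1)" using lex_asym[OF S m1V m2V] by blast
  have dist: "?a \<noteq> ?c" "?a \<noteq> ?d" "?a \<noteq> ?be" "?a \<noteq> ?ga" "?a \<noteq> ?de" "?a \<noteq> ?h" "?a \<noteq> ?r"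
     "?c \<noteq> ?d" "?c \<noteq> ?be" "?c \<noteq> ?ga" "?c \<noteq> ?de" "?c \<noteq> ?h" "?c \<noteq> ?r"
     "?d \<noteq> ?be" "?d \<noteq> ?ga" "?d \<noteq> ?de" "?d \<noteq> ?h" "?d \<noteq> ?r"
     "?be \<noteq> ?ga" "?be \<noteq> ?de" "?be \<noteq> ?h" "?be \<noteq> ?r"
     "?ga \<noteq> ?de" "?ga \<noteq> ?h" "?ga \<noteq> ?r" "?de \<noteq> ?h" "?de \<noteq> ?r" "?h \<noteq> ?r"
    using ineq by auto
  note distS = dist dist[symmetric]
  let ?C1 = "lex_less R ?m1 ?m2 \<and> inner_interval P ?d ?de \<and>
         (((?h, ?be) \<in> R \<and> (?ga, ?be) \<in> R) \<or> ((?h, ?d) \<in> R \<and> (?ga, ?d) \<in> R))"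
  let ?C2 = "lex_less R ?m1 ?m2 \<and> inner_interval P ?c ?ga \<and>
         (((?r, ?be) \<in> R \<and> (?de, ?be) \<in> R) \<or> ((?r, ?c) \<in> R \<and> (?de, ?c) \<in> R))"
  let ?C3 = "lex_less R ?m2 ?m1 \<and> inner_interval P ?c ?ga \<and>
         (((?r, ?a) \<in> R \<and> (?d, ?a) \<in> R) \<or> ((?r, ?ga) \<in> R \<and> (?d, ?ga) \<in> R))"
  let ?C4 = "lex_less R ?m2 ?m1 \<and> inner_interval P ?d ?de \<and>
         (((?c, ?a) \<in> R \<and> (?h, ?a) \<in> R) \<or> ((?c, ?de) \<in> R \<and> (?h, ?de) \<in> R))"
  have fwd: "?C1 \<or> ?C2 \<or> ?C3 \<or> ?C4" if red: "reduces_to_zero ?V R (inner_minors P) ?Sp"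
  proof -
    consider (lt) "lex_less R ?m1 ?m2" | (gt) "lex_less R ?m2 ?m1" using lex_total[OF S m1V m2V m12] by blast
    then show ?thesis
    proof cases
      case lt
      obtain s t where st: "inner_interval P s t"
        "(lex_less R (mon1 (fst s, snd t) + mon1 (fst t, snd s)) (mon1 s + mon1 t) \<and> (\<exists>m. ?m2 = m + mon1 s + mon1 t))
       \<or> (lex_less R (mon1 s + mon1 t) (mon1 (fst s, snd t) + mon1 (fst t, snd s)) \<and> (\<exists>m. ?m2 = m + mon1 (fst s, snd t) + mon1 (fst t, snd s)))"
        using reduce_find[OF S red Snz _ leadS_lt[OF lt]] kS by blast
      obtain s1 s2 t1 t2 where stp: "s = (s1, s2)" "t = (t1, t2)" by (cases s, cases t) blast
      have sti: "s1 < t1" "s2 < t2" using st(1) unfolding inner_iff stp by auto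
      from st(2) show ?thesis
      proof
        assume H: "lex_less R (mon1 (fst s, snd t) + mon1 (fst t, snd s)) (mon1 s + mon1 t) \<and> (\<exists>m. ?m2 = m + mon1 s + mon1 t)"
        then have "s \<in> {?be, ?d, ?c} \<and> t \<in> {?be, ?d, ?c}" using mem3 by blast
        then have "(s1 = k \<and> s2 = j \<and> t1 = p \<and> t2 = q) \<or> (s1 = i \<and> s2 = l \<and> t1 = p \<and> t2 = q)"
          using sti ineq unfolding stp by auto
        then show ?thesis
        proof
          assume e: "s1 = k \<and> s2 = j \<and> t1 = p \<and> t2 = q"
          have I: "inner_interval P ?d ?be" using st(1) e stp by simp
          have hV: "?h \<in> ?V" using inner_vertex[OF I] ineq by auto
          have "lex_less R (mon1 ?ga + mon1 ?h) (mon1 ?d + mon1 ?be)" using H e stp by simp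
          then have "lex_less R (mon1 ?h + mon1 ?ga) (mon1 ?be + mon1 ?d)" by (simp add: add.commute)
          then have RR: "((?h, ?be) \<in> R \<and> (?ga, ?be) \<in> R) \<or> ((?h, ?d) \<in> R \<and> (?ga, ?d) \<in> R)"
            using lex2_iff[OF S hV vbb(2) vbb(1) vab(4)] distS by blast
          have "inner_interval P ?d ?de" using inner_sub[OF I] ineq by auto
          then show ?thesis using lt RR by blast
        next
          assume e: "s1 = i \<and> s2 = l \<and> t1 = p \<and> t2 = q"
          have I: "inner_interval P ?c ?be" using st(1) e stp by simp
          have rV: "?r \<in> ?V" using inner_vertex[OF I] ineq by auto
          have "lex_less R (mon1 ?r + mon1 ?de) (mon1 ?c + mon1 ?be)" using H e stp by simp
          then have "lex_less R (mon1 ?r + mon1 ?de) (mon1 ?be + mon1 ?c)" by (simp add: add.commute)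
          then have RR: "((?r, ?be) \<in> R \<and> (?de, ?be) \<in> R) \<or> ((?r, ?c) \<in> R \<and> (?de, ?c) \<in> R)"
            using lex2_iff[OF S rV vbb(3) vbb(1) vab(3)] distS by blast
          have "inner_interval P ?c ?ga" using inner_sub[OF I] ineq by auto
          then show ?thesis using lt RR by blast
        qed
      next
        assume H: "lex_less R (mon1 s + mon1 t) (mon1 (fst s, snd t) + mon1 (fst t, snd s)) \<and> (\<exists>m. ?m2 = m + mon1 (fst s, snd t) + mon1 (fst t, snd s))"
        then have "(fst s, snd t) \<in> {?be, ?d, ?c} \<and> (fst t, snd s) \<in> {?be, ?d, ?c}" using mem3 by blast
        then have e: "s1 = i \<and> s2 = j \<and> t1 = k \<and> t2 = l"
          using sti ineq unfolding stp by auto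
        have "lex_less R A1 B1" using H e stp unfolding A1_def B1_def by simp
        then show ?thesis using lex_asym[OF S B1V A1V lexA1] by blast
      qed
    next
      case gt
      obtain s t where st: "inner_interval P s t"
        "(lex_less R (mon1 (fst s, snd t) + mon1 (fst t, snd s)) (mon1 s + mon1 t) \<and> (\<exists>m. ?m1 = m + mon1 s + mon1 t))
       \<or> (lex_less R (mon1 s + mon1 t) (mon1 (fst s, snd t) + mon1 (fst t, snd s)) \<and> (\<exists>m. ?m1 = m + mon1 (fst s, snd t) + mon1 (fst t, snd s)))"
        using reduce_find[OF S red Snz _ leadS_gt[OF gt]] kS by blast
      obtain s1 s2 t1 t2 where stp: "s = (s1, s2)" "t = (t1, t2)" by (cases s, cases t) blast
      have sti: "s1 < t1" "s2 < t2" using st(1) unfolding inner_iff stp by auto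
      from st(2) show ?thesis
      proof
        assume H: "lex_less R (mon1 (fst s, snd t) + mon1 (fst t, snd s)) (mon1 s + mon1 t) \<and> (\<exists>m. ?m1 = m + mon1 s + mon1 t)"
        then have "s \<in> {?a, ?ga, ?de} \<and> t \<in> {?a, ?ga, ?de}" using mem3 by blast
        then have "(s1 = i \<and> s2 = j \<and> t1 = k \<and> t2 = q) \<or> (s1 = i \<and> s2 = j \<and> t1 = p \<and> t2 = l)"
          using sti ineq unfolding stp by auto
        then show ?thesis
        proof
          assume e: "s1 = i \<and> s2 = j \<and> t1 = k \<and> t2 = q"
          have I: "inner_interval P ?a ?ga" using st(1) e stp by simp
          have rV: "?r \<in> ?V" using inner_vertex[OF I] ineq by auto
          have "lex_less R (mon1 ?r + mon1 ?d) (mon1 ?a + mon1 ?ga)" using H e stp by simp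
          then have RR: "((?r, ?a) \<in> R \<and> (?d, ?a) \<in> R) \<or> ((?r, ?ga) \<in> R \<and> (?d, ?ga) \<in> R)"
            using lex2_iff[OF S rV vab(4) vab(1) vbb(2)] distS by blast
          have "inner_interval P ?c ?ga" using inner_sub[OF I] ineq by auto
          then show ?thesis using gt RR by blast
        next
          assume e: "s1 = i \<and> s2 = j \<and> t1 = p \<and> t2 = l"
          have I: "inner_interval P ?a ?de" using st(1) e stp by simp
          have hV: "?h \<in> ?V" using inner_vertex[OF I] ineq by auto
          have "lex_less R (mon1 ?c + mon1 ?h) (mon1 ?a + mon1 ?de)" using H e stp by simp
          then have RR: "((?c, ?a) \<in> R \<and> (?h, ?a) \<in> R) \<or> ((?c, ?de) \<in> R \<and> (?h, ?de) \<in> R)"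
            using lex2_iff[OF S vab(3) hV vab(1) vbb(3)] distS by blast
          have "inner_interval P ?d ?de" using inner_sub[OF I] ineq by auto
          then show ?thesis using gt RR by blast
        qed
      next
        assume H: "lex_less R (mon1 s + mon1 t) (mon1 (fst s, snd t) + mon1 (fst t, snd s)) \<and> (\<exists>m. ?m1 = m + mon1 (fst s, snd t) + mon1 (fst t, snd s))"
        then have "(fst s, snd t) \<in> {?a, ?ga, ?de} \<and> (fst t, snd s) \<in> {?a, ?ga, ?de}" using mem3 by blast
        then have e: "s1 = k \<and> s2 = l \<and> t1 = p \<and> t2 = q"
          using sti ineq unfolding stp by auto
        have "lex_less R A2 B2" using H e stp unfolding A2_def B2_def by simp
        then show ?thesis using lex_asym[OF S B2V A2V lexA2] by blast
      qed
    qed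
  qed
  note IC1 = if_case[OF S polyid1, unfolded fst_conv snd_conv]
  note IC2 = if_case[OF S polyid2, unfolded fst_conv snd_conv]
  have bwd: "reduces_to_zero ?V R (inner_minors P) ?Sp" if C: "?C1 \<or> ?C2 \<or> ?C3 \<or> ?C4"
  proof -
    have m2e: "?m2 = mon1 ?be + mon1 ?d + mon1 ?c" by (simp add: mon3_def)
    have m1e: "?m1 = mon1 ?a + mon1 ?ga + mon1 ?de" by (simp add: mon3_def)
    from C consider (c1) ?C1 | (c2) ?C2 | (c3) ?C3 | (c4) ?C4 by blast
    then show ?thesis
    proof cases
      case c1
      have lt: "lex_less R ?m1 ?m2" using c1 by blast
      have I1: "inner_interval P ?a ?de" using inner_union_h[OF assms(6)] c1 by blast
      have I2: "inner_interval P ?d ?be" using inner_union_v[OF _ assms(7)] c1 by blast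
      have hV: "?h \<in> ?V" using inner_vertex[OF I1] ineq by auto
      have "lex_less R (mon1 ?h + mon1 ?ga) (mon1 ?be + mon1 ?d)"
        using c1 by (subst lex2_iff[OF S hV vbb(2) vbb(1) vab(4)]) (use ineq in auto)
      from lex_add_right[OF this, of "mon1 ?c"]
      have X: "lex_less R (mon1 ?h + mon1 ?ga + mon1 ?c) ?m2" by (simp add: mon3_def)
      have L: "lead_monom R ?Sp = ?m2" using leadS_lt[OF lt] .
      show ?thesis
      proof (rule IC1[OF I1 I2 dist(2) dist(3) dist(4) dist(6) vbb(2) vab(3)])
        show "lex_le R (mon1 ?ga + mon1 ?a + mon1 ?de) (lead_monom R ?Sp)"
          unfolding L by (rule lex_le_of_less[OF _ lt]) (simp add: mon3_def add_ac)
        show "lex_le R (mon1 ?ga + mon1 ?c + mon1 ?h) (lead_monom R ?Sp)"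
          unfolding L by (rule lex_le_of_less[OF _ X]) (simp add: add_ac)
        show "lex_le R (mon1 ?c + mon1 ?d + mon1 ?be) (lead_monom R ?Sp)"
          unfolding L by (rule lex_le_eq) (simp add: mon3_def add_ac)
        show "lex_le R (mon1 ?c + mon1 ?ga + mon1 ?h) (lead_monom R ?Sp)"
          unfolding L by (rule lex_le_of_less[OF _ X]) (simp add: add_ac)
      qed
    next
      case c2
      have lt: "lex_less R ?m1 ?m2" using c2 by blast
      have I1: "inner_interval P ?a ?ga" using inner_union_v[OF assms(6)] c2 by blast
      have I2: "inner_interval P ?c ?be" using inner_union_h[OF _ assms(7)] c2 by blast
      have rV: "?r \<in> ?V" using inner_vertex[OF I1] ineq by auto
      have "lex_less R (mon1 ?r + mon1 ?de) (mon1 ?be + mon1 ?c)"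
        using c2 by (subst lex2_iff[OF S rV vbb(3) vbb(1) vab(3)]) (use ineq in auto)
      from lex_add_right[OF this, of "mon1 ?d"]
      have X: "lex_less R (mon1 ?r + mon1 ?de + mon1 ?d) ?m2" by (simp add: mon3_def add_ac)
      have L: "lead_monom R ?Sp = ?m2" using leadS_lt[OF lt] .
      show ?thesis
      proof (rule IC2[OF I1 I2 dist(1) dist(3) dist(7) dist(5) vbb(3) vab(4)])
        show "lex_le R (mon1 ?de + mon1 ?a + mon1 ?ga) (lead_monom R ?Sp)"
          unfolding L by (rule lex_le_of_less[OF _ lt]) (simp add: mon3_def add_ac)
        show "lex_le R (mon1 ?de + mon1 ?r + mon1 ?d) (lead_monom R ?Sp)"
          unfolding L by (rule lex_le_of_less[OF _ X]) (simp add: add_ac)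
        show "lex_le R (mon1 ?d + mon1 ?c + mon1 ?be) (lead_monom R ?Sp)"
          unfolding L by (rule lex_le_eq) (simp add: mon3_def add_ac)
        show "lex_le R (mon1 ?d + mon1 ?r + mon1 ?de) (lead_monom R ?Sp)"
          unfolding L by (rule lex_le_of_less[OF _ X]) (simp add: add_ac)
      qed
    next
      case c3
      have gt: "lex_less R ?m2 ?m1" using c3 by blast
      have I1: "inner_interval P ?a ?ga" using inner_union_v[OF assms(6)] c3 by blast
      have I2: "inner_interval P ?c ?be" using inner_union_h[OF _ assms(7)] c3 by blast
      have rV: "?r \<in> ?V" using inner_vertex[OF I1] ineq by auto
      have "lex_less R (mon1 ?r + mon1 ?d) (mon1 ?a + mon1 ?ga)"
        using c3 by (subst lex2_iff[OF S rV vab(4) vab(1) vbb(2)]) (use ineq in auto)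
      from lex_add_right[OF this, of "mon1 ?de"]
      have X: "lex_less R (mon1 ?r + mon1 ?d + mon1 ?de) ?m1" by (simp add: mon3_def)
      have L: "lead_monom R ?Sp = ?m1" using leadS_gt[OF gt] .
      show ?thesis
      proof (rule IC2[OF I1 I2 dist(1) dist(3) dist(7) dist(5) vbb(3) vab(4)])
        show "lex_le R (mon1 ?de + mon1 ?a + mon1 ?ga) (lead_monom R ?Sp)"
          unfolding L by (rule lex_le_eq) (simp add: mon3_def add_ac)
        show "lex_le R (mon1 ?de + mon1 ?r + mon1 ?d) (lead_monom R ?Sp)"
          unfolding L by (rule lex_le_of_less[OF _ X]) (simp add: add_ac)
        show "lex_le R (mon1 ?d + mon1 ?c + mon1 ?be) (lead_monom R ?Sp)"
          unfolding L by (rule lex_le_of_less[OF _ gt]) (simp add: mon3_def add_ac)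
        show "lex_le R (mon1 ?d + mon1 ?r + mon1 ?de) (lead_monom R ?Sp)"
          unfolding L by (rule lex_le_of_less[OF _ X]) (simp add: add_ac)
      qed
    next
      case c4
      have gt: "lex_less R ?m2 ?m1" using c4 by blast
      have I1: "inner_interval P ?a ?de" using inner_union_h[OF assms(6)] c4 by blast
      have I2: "inner_interval P ?d ?be" using inner_union_v[OF _ assms(7)] c4 by blast
      have hV: "?h \<in> ?V" using inner_vertex[OF I1] ineq by auto
      have "lex_less R (mon1 ?c + mon1 ?h) (mon1 ?a + mon1 ?de)"
        using c4 by (subst lex2_iff[OF S vab(3) hV vab(1) vbb(3)]) (use ineq in auto)
      from lex_add_right[OF this, of "mon1 ?ga"]
      have X: "lex_less R (mon1 ?c + mon1 ?h + mon1 ?ga) ?m1" by (simp add: mon3_def add_ac)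
      have L: "lead_monom R ?Sp = ?m1" using leadS_gt[OF gt] .
      show ?thesis
      proof (rule IC1[OF I1 I2 dist(2) dist(3) dist(4) dist(6) vbb(2) vab(3)])
        show "lex_le R (mon1 ?ga + mon1 ?a + mon1 ?de) (lead_monom R ?Sp)"
          unfolding L by (rule lex_le_eq) (simp add: mon3_def add_ac)
        show "lex_le R (mon1 ?ga + mon1 ?c + mon1 ?h) (lead_monom R ?Sp)"
          unfolding L by (rule lex_le_of_less[OF _ X]) (simp add: add_ac)
        show "lex_le R (mon1 ?c + mon1 ?d + mon1 ?be) (lead_monom R ?Sp)"
          unfolding L by (rule lex_le_of_less[OF _ gt]) (simp add: mon3_def add_ac)
        show "lex_le R (mon1 ?c + mon1 ?ga + mon1 ?h) (lead_monom R ?Sp)"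
          unfolding L by (rule lex_le_of_less[OF _ X]) (simp add: add_ac)
      qed
    qed
  qed
  show ?thesis unfolding sp Let_def using fwd bwd by blast
qed

end
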